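(* Let $\mathbf M=(\mathbb X,\mathbb U,\mathbb Y,x_0,\mathbf t,h)$ and $\widehat{\mathbf M}=(\hat{\mathbb X},\hat{\mathbb U},\mathbb Y,\hat x_0,\hat{\mathbf t},\hat h)$ be gMDPs with $\mathbf M\preceq^\delta_\epsilon\widehat{\mathbf M}$ via a relation $\mathcal R\subseteq\mathbb X\times\hat{\mathbb X}$, and let $\psi$ be an scLTL formula with DFA $\mathcal A_\psi=(Q,q_0,\Sigma,F,\tau)$. If $\hat V:\hat{\mathbb X}\times Q\to[0,1]$ and $V:\mathbb X\times Q\to[0,1]$ satisfy $\hat V(\hat x,q)\ge V(x,q)$ for all $(x,\hat x)\in\mathcal R$ and $q\in Q$, then $$\mathbf T^*_{-\epsilon,-\delta}(\hat V)(\hat x,q)\ge\mathbf T^*(V)(x,q)\qquad\forall(x,\hat x)\in\mathcal R,\ q\in Q.$$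
   Context: A gMDP is $(\mathbb X,\mathbb U,\mathbb Y,x_0,\mathbf t,h)$ with Polish state/input spaces, output space $\mathbb Y$ with metric $\mathbf d_{\mathbb Y}$, initial state, stochastic kernel $\mathbf t(\cdot\mid x,u)$ and measurable output map $h$. $\mathbf M\preceq^\delta_\epsilon\widehat{\mathbf M}$ means there exist an interface $\mathcal U_v:\mathbb U\times\mathbb X\times\hat{\mathbb X}\to\mathcal P(\hat{\mathbb U})$, a measurable relation $\mathcal R\subseteq\mathbb X\times\hat{\mathbb X}$ and a Borel kernel $\mathbb W_{\mathbf t}(\cdot\mid u,x,\hat x)$ on $\mathbb X\times\hat{\mathbb X}$ with $(x_0,\hat x_0)\in\mathcal R$ and, for all $(x,\hat x)\in\mathcal R$: $\mathbf d_{\mathbb Y}(h(x),\hat h(\hat x))\le\epsilon$, and for all $u\in\mathbb U$, $\mathbb W=\mathbb W_{\mathbf t}(\cdot\mid u,x,\hat x)$ has marginals $\mathbf t(\cdot\mid x,u)$ on $\mathbb X$ and $\hat{\mathbf t}(\cdot\mid\hat x,\mathcal U_v(u,x,\hat x))$ on $\hat{\mathbb X}$, and $\mathbb W(\mathcal R)\ge1-\delta$. $\Sigma=2^{\mathsf{AP}}$, $\mathsf L:\mathbb Y\to\Sigma$ measurable labelling, $\mathcal A_\psi$ a DFA (accepting set $F$, transition $\tau:Q\times\Sigma\to Q$) for $\psi$. For the product $\mathbf M\otimes\mathcal A_\psi$ (states $\mathbb X\times Q$, kernel $\bar{\mathbf t}(dx'\times\{q'\}\mid x,q,u)=\mathbf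 1_{\{q'\}}(\tau(q,\mathsf L(h(x'))))\mathbf t(dx'\mid x,u)$): $\mathbf T^\nu(V)(x,q)=\int\max\{\mathbf 1_F(q'),V(x',q')\}\bar{\mathbf t}(dx'\times\{q'\}\mid x,q,\nu(x,q))$ and $\mathbf T^*(V)=\sup_\nu\mathbf T^\nu(V)$ over policies $\nu:\mathbb X\times Q\to\mathcal P(\mathbb U)$. With $\mathcal N_\epsilon(y)=\{y'\in\mathbb Y:\mathbf d_{\mathbb Y}(y',y)\le\epsilon\}$ and $\bar\tau(q,\hat x')=\{\tau(q,\alpha):\alpha\in\mathsf L(\mathcal N_\epsilon(\hat h(\hat x')))\}$, the optimistic operator is $\mathbf T^*_{-\epsilon,-\delta}(\hat V)(\hat x,q)=\sup_\mu\mathbf L\big(\int_{\hat{\mathbb X}}\max_{q'\in\bar\tau(q,\hat x')}\max\{\mathbf 1_F(q'),\hat V(\hat x',q')\}\,\hat{\mathbf t}(d\hat x'\mid\hat x,\mu)+\delta\big)$, the supremum over inputs/input distributions $\mu$ of $\widehat{\mathbf M}$, with $\mathbf L(r)=\min(1,\max(0,r))$. *)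

theory Defs
  imports "HOL-Probability.Probability"
begin

text \<open>Probability distributions on a (Borel) space: P(A) = space (prob_algebra borel).
 A gMDP is represented by its kernel t :: 'x => 'u => 'x measure (t x u = t(.|x,u)),
 its output map h :: 'x => 'y and initial state x0.  Input distributions mu in P(U)
 act on the kernel by mu >>= t x.\<close>

definition is_kernel :: "('a::topological_space \<Rightarrow> 'b::topological_space \<Rightarrow> 'c::topological_space measure) \<Rightarrow> bool" where
  "is_kernel t \<longleftrightarrow>
     (\<lambda>p. t (fst p) (snd p)) \<in> (borel :: ('a \<times> 'b) measure) \<rightarrow>\<^sub>M prob_algebra (borel :: 'c measure)"

text \<open>Approximate simulation relation M <=^delta_eps M-hat, witnessed by interface Uv,
 measurable relation R and Borel coupling kernel W (W u x xh is a measure on X x X-hat).\<close>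

definition sim_rel ::
  "('x::polish_space \<Rightarrow> 'u::polish_space \<Rightarrow> 'x measure) \<Rightarrow> ('x \<Rightarrow> 'y::metric_space) \<Rightarrow> 'x \<Rightarrow>
   ('xh::polish_space \<Rightarrow> 'uh::polish_space \<Rightarrow> 'xh measure) \<Rightarrow> ('xh \<Rightarrow> 'y) \<Rightarrow> 'xh \<Rightarrow>
   real \<Rightarrow> real \<Rightarrow>
   ('u \<Rightarrow> 'x \<Rightarrow> 'xh \<Rightarrow> 'uh measure) \<Rightarrow> ('x \<times> 'xh) set \<Rightarrow>
   ('u \<Rightarrow> 'x \<Rightarrow> 'xh \<Rightarrow> ('x \<times> 'xh) measure) \<Rightarrow> bool" where
  "sim_rel t h x0 th hh xh0 \<epsilon> \<delta> Uv R W \<longleftrightarrow>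
     R \<in> sets (borel :: ('x \<times> 'xh) measure) \<and>
     (\<lambda>p. Uv (fst p) (fst (snd p)) (snd (snd p)))
        \<in> (borel :: ('u \<times> 'x \<times> 'xh) measure) \<rightarrow>\<^sub>M prob_algebra (borel :: 'uh measure) \<and>
     (\<lambda>p. W (fst p) (fst (snd p)) (snd (snd p)))
        \<in> (borel :: ('u \<times> 'x \<times> 'xh) measure) \<rightarrow>\<^sub>M prob_algebra (borel :: ('x \<times> 'xh) measure) \<and>
     (x0, xh0) \<in> R \<and>
     (\<forall>x xh. (x, xh) \<in> R \<longrightarrow>
        dist (h x) (hh xh) \<le> \<epsilon> \<and>
        (\<forall>u. distr (W u x xh) borel fst = t x u \<and>
             distr (W u x xh) borel snd = (Uv u x xh \<bind> th xh) \<and>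
             measure (W u x xh) R \<ge> 1 - \<delta>))"

definition approx_sim ::
  "('x::polish_space \<Rightarrow> 'u::polish_space \<Rightarrow> 'x measure) \<Rightarrow> ('x \<Rightarrow> 'y::metric_space) \<Rightarrow> 'x \<Rightarrow>
   ('xh::polish_space \<Rightarrow> 'uh::polish_space \<Rightarrow> 'xh measure) \<Rightarrow> ('xh \<Rightarrow> 'y) \<Rightarrow> 'xh \<Rightarrow>
   real \<Rightarrow> real \<Rightarrow> ('x \<times> 'xh) set \<Rightarrow> bool" where
  "approx_sim t h x0 th hh xh0 \<epsilon> \<delta> R \<longleftrightarrow>
     (\<exists>Uv W. sim_rel t h x0 th hh xh0 \<epsilon> \<delta> Uv R W)"

text \<open>Bellman operator T^nu on the product M (x) A_psi, policy nu : X x Q -> P(U).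
 The product kernel puts q' = tau q (L (h x')) deterministically.\<close>

definition T_pol ::
  "('x \<Rightarrow> 'u \<Rightarrow> 'x measure) \<Rightarrow> ('x \<Rightarrow> 'y) \<Rightarrow> ('y \<Rightarrow> 'ap set) \<Rightarrow>
   ('q \<Rightarrow> 'ap set \<Rightarrow> 'q) \<Rightarrow> 'q set \<Rightarrow>
   ('x \<Rightarrow> 'q \<Rightarrow> 'u measure) \<Rightarrow> ('x \<Rightarrow> 'q \<Rightarrow> real) \<Rightarrow> 'x \<Rightarrow> 'q \<Rightarrow> ennreal" where
  "T_pol t h L \<tau> F \<nu> V x q =
     (\<integral>\<^sup>+ x'. ennreal (max (indicator F (\<tau> q (L (h x')))) (V x' (\<tau> q (L (h x')))))
        \<partial>(\<nu> x q \<bind> t x))"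

definition T_star ::
  "('x \<Rightarrow> 'u::topological_space \<Rightarrow> 'x measure) \<Rightarrow> ('x \<Rightarrow> 'y) \<Rightarrow> ('y \<Rightarrow> 'ap set) \<Rightarrow>
   ('q \<Rightarrow> 'ap set \<Rightarrow> 'q) \<Rightarrow> 'q set \<Rightarrow>
   ('x \<Rightarrow> 'q \<Rightarrow> real) \<Rightarrow> 'x \<Rightarrow> 'q \<Rightarrow> ennreal" where
  "T_star t h L \<tau> F V x q =
     (\<Squnion>\<nu> \<in> {\<nu>. \<forall>x q. \<nu> x q \<in> space (prob_algebra borel)}. T_pol t h L \<tau> F \<nu> V x q)"

definition tau_bar ::
  "('q \<Rightarrow> 'ap set \<Rightarrow> 'q) \<Rightarrow> ('y::metric_space \<Rightarrow> 'ap set) \<Rightarrow> ('xh \<Rightarrow> 'y) \<Rightarrow> real \<Rightarrow>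
   'q \<Rightarrow> 'xh \<Rightarrow> 'q set" where
  "tau_bar \<tau> L hh \<epsilon> q xh' = {\<tau> q (L y') | y'. dist y' (hh xh') \<le> \<epsilon>}"

text \<open>Optimistic operator T^*_{-eps,-delta}; L(r) = min 1 (max 0 r), where the max with 0
 is automatic in ennreal.  The max over the finite set tau-bar is written as a Sup.\<close>

definition T_opt ::
  "('xh \<Rightarrow> 'uh::topological_space \<Rightarrow> 'xh measure) \<Rightarrow> ('xh \<Rightarrow> 'y::metric_space) \<Rightarrow> ('y \<Rightarrow> 'ap set) \<Rightarrow>
   ('q \<Rightarrow> 'ap set \<Rightarrow> 'q) \<Rightarrow> 'q set \<Rightarrow> real \<Rightarrow> real \<Rightarrow>
   ('xh \<Rightarrow> 'q \<Rightarrow> real) \<Rightarrow> 'xh \<Rightarrow> 'q \<Rightarrow> ennreal" where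
  "T_opt th hh L \<tau> F \<epsilon> \<delta> Vh xh q =
     (\<Squnion>\<mu> \<in> space (prob_algebra (borel :: 'uh measure)).
        min 1 ((\<integral>\<^sup>+ xh'. (\<Squnion>q' \<in> tau_bar \<tau> L hh \<epsilon> q xh'.
                   ennreal (max (indicator F q') (Vh xh' q'))) \<partial>(\<mu> \<bind> th xh))
               + ennreal \<delta>))"

end

theory Submission
  imports Defs
begin

lemma inner_Fsigma:
  fixes M :: "('a::polish_space \<times> 'b::polish_space) measure"
  assumes sb: "sets M = sets borel" and fin: "emeasure M (space M) \<noteq> \<infinity>"
    and C: "C \<in> sets borel"
  shows "\<exists>D. D \<subseteq> C \<and> D \<in> sets borel \<and> snd ` D \<in> sets borel \<and> emeasure M (C - D) = 0"
proof -
  interpret finite_measure M by (rule finite_measureI) (use fin in auto)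
  have CM: "C \<in> sets M" using C sb by simp
  have ex: "\<exists>K. K \<subseteq> C \<and> compact K \<and> measure M C - 1 / real (Suc n) < measure M K" for n
  proof (cases "measure M C - 1 / real (Suc n) < 0")
    case True
    then show ?thesis by (intro exI[of _ "{}"]) auto
  next
    case False
    have "ennreal (measure M C - 1 / real (Suc n)) < ennreal (measure M C)"
    proof (rule ennreal_lessI)
      have "0 < 1 / real (Suc n)" by simp
      then show "0 < measure M C" using False by linarith
    qed simp
    also have "\<dots> = (SUP K \<in> {K. K \<subseteq> C \<and> compact K}. emeasure M K)"
      using inner_regular[OF sb fin C] emeasure_eq_measure by simp
    finally obtain K where K: "K \<subseteq> C" "compact K" "ennreal (measure M C - 1 / real (Suc n)) < emeasure M K"
      by (auto simp: less_SUP_iff)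
    have "measure M C - 1 / real (Suc n) < measure M K"
      using K(3) False by (simp add: emeasure_eq_measure ennreal_less_iff)
    with K show ?thesis by blast
  qed
  then obtain K where K: "\<And>n. K n \<subseteq> C \<and> compact (K n) \<and> measure M C - 1 / real (Suc n) < measure M (K n)"
    by metis
  define D where "D = (\<Union>n. K n)"
  have Kb: "K n \<in> sets borel" for n using K[of n] by (simp add: borel_closed compact_imp_closed)
  have Db: "D \<in> sets borel" unfolding D_def using Kb by auto
  have DC: "D \<subseteq> C" unfolding D_def using K by auto
  have "snd ` D = (\<Union>n. snd ` K n)" unfolding D_def by auto
  moreover have "snd ` K n \<in> sets borel" for n
    using K[of n] by (intro borel_closed compact_imp_closed compact_continuous_image continuous_on_snd continuous_on_id) auto
  ultimately have sD: "snd ` D \<in> sets borel" by auto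
  have "measure M (C - D) \<le> 0"
  proof (rule ccontr)
    assume "\<not> ?thesis"
    then obtain n where n: "inverse (real (Suc n)) < measure M (C - D)"
      using reals_Archimedean[of "measure M (C - D)"] by fastforce
    have "measure M (C - D) = measure M C - measure M D"
      using Db DC CM sb by (intro finite_measure_Diff) auto
    also have "\<dots> \<le> measure M C - measure M (K n)"
      using Db sb by (auto intro!: finite_measure_mono simp: D_def)
    also have "\<dots> < 1 / real (Suc n)" using K[of n] by simp
    finally show False using n by (simp add: inverse_eq_divide)
  qed
  then have "emeasure M (C - D) = 0"
    by (simp add: emeasure_eq_measure measure_nonneg antisym)
  with Db DC sD show ?thesis by blast
qed

lemma snd_borel: "(snd :: 'a::topological_space \<times> 'b::topological_space \<Rightarrow> 'b) \<in> borel_measurable borel"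
  by (intro borel_measurable_continuous_onI continuous_on_snd continuous_on_id)

lemma fst_borel: "(fst :: 'a::topological_space \<times> 'b::topological_space \<Rightarrow> 'a) \<in> borel_measurable borel"
  by (intro borel_measurable_continuous_onI continuous_on_fst continuous_on_id)

lemma lower_transfer:
  fixes M :: "('a::polish_space \<times> 'b::polish_space) measure"
    and k :: "'a \<times> 'b \<Rightarrow> ennreal" and g :: "'b \<Rightarrow> ennreal"
  assumes sb: "sets M = sets borel" and fin: "emeasure M (space M) \<noteq> \<infinity>"
    and k: "k \<in> borel_measurable borel" and kfin: "finite (range k)"
    and kg: "\<And>p. k p \<le> g (snd p)"
  shows "(\<integral>\<^sup>+p. k p \<partial>M) \<le> (\<integral>\<^sup>+y. g y \<partial>(distr M borel snd))"
proof -
  have kc: "k -` {c} \<in> sets borel" for c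
    using measurable_sets[OF k, of "{c}"] by simp
  have "\<forall>c. \<exists>D. D \<subseteq> k -` {c} \<and> D \<in> sets borel \<and> snd ` D \<in> sets borel \<and> emeasure M (k -` {c} - D) = 0"
    using inner_Fsigma[OF sb fin kc] by blast
  then obtain D where D: "\<And>c. D c \<subseteq> k -` {c}" "\<And>c. D c \<in> sets borel"
    "\<And>c. snd ` D c \<in> sets borel" "\<And>c. emeasure M (k -` {c} - D c) = 0"
    by metis
  define DD where "DD = (\<Union>c\<in>range k. D c)"
  define g' where "g' y = (SUP c\<in>range k. c * indicator (snd ` D c) y)" for y
  have g'm: "g' \<in> borel_measurable borel"
    unfolding g'_def
    by (intro borel_measurable_SUP countable_finite[OF kfin] borel_measurable_times_ennreal
        borel_measurable_const borel_measurable_indicator D(3))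
  have g'g: "g' y \<le> g y" for y
    unfolding g'_def
  proof (rule SUP_least)
    fix c assume "c \<in> range k"
    show "c * indicator (snd ` D c) y \<le> g y"
    proof (cases "y \<in> snd ` D c")
      case True
      then obtain p where "p \<in> D c" "snd p = y" by auto
      then have "k p = c" using D(1) by auto
      then show ?thesis using kg[of p] \<open>snd p = y\<close> True by simp
    qed simp
  qed
  have nullU: "(\<Union>c\<in>range k. k -` {c} - D c) \<in> null_sets M"
    using D(2,4) kc sb by (intro null_sets_UN' countable_finite[OF kfin]) auto
  have ae: "AE p in M. p \<in> DD"
    by (rule AE_I'[OF nullU]) (auto simp: DD_def)
  have sndM: "snd \<in> measurable M borel"
    using snd_borel by (simp add: measurable_cong_sets[OF sb refl])
  have "(\<integral>\<^sup>+p. k p \<partial>M) = (\<integral>\<^sup>+p. k p * indicator DD p \<partial>M)"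
    by (rule nn_integral_cong_AE) (use ae in auto)
  also have "\<dots> \<le> (\<integral>\<^sup>+p. g' (snd p) \<partial>M)"
  proof (rule nn_integral_mono)
    fix p
    show "k p * indicator DD p \<le> g' (snd p)"
    proof (cases "p \<in> DD")
      case True
      then obtain c where c: "c \<in> range k" "p \<in> D c" by (auto simp: DD_def)
      then have "k p = c" using D(1) by auto
      then have "k p * indicator DD p = c * indicator (snd ` D c) (snd p)"
        using True c by simp
      also have "\<dots> \<le> g' (snd p)" unfolding g'_def by (rule SUP_upper) (use c in auto)
      finally show ?thesis .
    qed simp
  qed
  also have "\<dots> = (\<integral>\<^sup>+y. g' y \<partial>(distr M borel snd))"
    by (rule nn_integral_distr[symmetric]) (use sndM g'm in auto)
  also have "\<dots> \<le> (\<integral>\<^sup>+y. g y \<partial>(distr M borel snd))"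
    by (rule nn_integral_mono) (rule g'g)
  finally show ?thesis .
qed

lemma coupling_ineq:
  fixes Wm :: "('a::polish_space \<times> 'b::polish_space) measure"
    and f :: "'a \<Rightarrow> ennreal" and g :: "'b \<Rightarrow> ennreal"
  assumes P: "prob_space Wm" and sb: "sets Wm = sets borel" and R: "R \<in> sets borel"
    and d: "emeasure Wm (UNIV - R) \<le> d"
    and f1: "\<And>a. f a \<le> 1" and fg: "\<And>a b. (a, b) \<in> R \<Longrightarrow> f a \<le> g b"
  shows "(\<integral>\<^sup>+a. f a \<partial>(distr Wm borel fst)) \<le> (\<integral>\<^sup>+b. g b \<partial>(distr Wm borel snd)) + d"
proof -
  interpret prob_space Wm by (rule P)
  have spW: "space Wm = UNIV" using sets_eq_imp_space_eq[OF sb] by simp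
  have fstM: "fst \<in> measurable Wm borel"
    using fst_borel by (simp add: measurable_cong_sets[OF sb refl])
  have Rm: "R \<in> sets Wm" "UNIV - R \<in> sets Wm" using R sb by auto
  show ?thesis
    unfolding nn_integral_def[of "distr Wm borel fst" f]
  proof (rule SUP_least, clarify)
    fix s assume sf: "simple_function (distr Wm borel fst) s" and sle: "s \<le> f"
    have s1: "s a \<le> 1" for a using le_funD[OF sle, of a] f1[of a] by (rule order_trans)
    have sfin: "finite (range s)" using sf by (simp add: simple_function_def)
    have smb: "s \<in> borel_measurable borel"
      using borel_measurable_simple_function[OF sf] by (simp add: measurable_cong_sets[OF sets_distr refl])
    define k where "k p = s (fst p) * indicator R p" for p
    have km: "k \<in> borel_measurable borel"
    proof -
      have "(\<lambda>p. s (fst p)) \<in> borel_measurable borel" by (rule measurable_compose[OF fst_borel smb])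
      then show ?thesis unfolding k_def
        using borel_measurable_times_ennreal borel_measurable_indicator[OF R] by blast
    qed
    have kfin: "finite (range k)"
    proof (rule finite_subset[OF _ finite_insert[THEN iffD2, OF sfin]])
      show "range k \<subseteq> insert 0 (range s)" by (auto simp: k_def indicator_def)
    qed
    have kg: "k p \<le> g (snd p)" for p
    proof (cases "p \<in> R")
      case True
      then have "s (fst p) \<le> g (snd p)"
        using le_funD[OF sle, of "fst p"] fg[of "fst p" "snd p"] by simp
      then show ?thesis using True by (simp add: k_def)
    qed (simp add: k_def)
    have "integral\<^sup>S (distr Wm borel fst) s = (\<integral>\<^sup>+a. s a \<partial>(distr Wm borel fst))"
      by (rule nn_integral_eq_simple_integral[OF sf, symmetric])
    also have "\<dots> = (\<integral>\<^sup>+p. s (fst p) \<partial>Wm)"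
      by (rule nn_integral_distr) (use fstM smb in auto)
    also have "\<dots> \<le> (\<integral>\<^sup>+p. k p + indicator (UNIV - R) p \<partial>Wm)"
    proof (rule nn_integral_mono)
      fix p show "s (fst p) \<le> k p + indicator (UNIV - R) p"
        using s1[of "fst p"] by (cases "p \<in> R") (simp_all add: k_def)
    qed
    also have "\<dots> = (\<integral>\<^sup>+p. k p \<partial>Wm) + emeasure Wm (UNIV - R)"
    proof -
      have kmW: "k \<in> borel_measurable Wm" using km by (simp add: measurable_cong_sets[OF sb refl])
      have iW: "indicator (UNIV - R) \<in> borel_measurable Wm" using Rm(2) by (rule borel_measurable_indicator)
      show ?thesis using nn_integral_add[OF kmW iW] nn_integral_indicator[OF Rm(2)] by simp
    qed
    also have "\<dots> \<le> (\<integral>\<^sup>+b. g b \<partial>(distr Wm borel snd)) + d"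
      using lower_transfer[OF sb _ km kfin kg] d by (intro add_mono) auto
    finally show "integral\<^sup>S (distr Wm borel fst) s \<le> (\<integral>\<^sup>+b. g b \<partial>(distr Wm borel snd)) + d" .
  qed
qed

lemma bind_in_prob_algebra:
  assumes A: "A \<in> space (prob_algebra M)" and B: "B \<in> M \<rightarrow>\<^sub>M prob_algebra N"
  shows "A \<bind> B \<in> space (prob_algebra N)"
  using prob_space_bind'[OF A B] sets_bind'[OF A B] by (simp add: space_prob_algebra)

lemma pair_const_left_borel: "(\<lambda>u. (c, u)) \<in> borel_measurable borel"
  by (intro borel_measurable_continuous_onI continuous_intros)

lemma pair_const2_left_borel: "(\<lambda>u. (u, c, d)) \<in> borel_measurable borel"
  by (intro borel_measurable_continuous_onI continuous_intros)

theorem lemma4: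
  fixes t :: "'x::polish_space \<Rightarrow> 'u::polish_space \<Rightarrow> 'x measure"
    and h :: "'x \<Rightarrow> 'y::metric_space" and x0 :: 'x
    and th :: "'xh::polish_space \<Rightarrow> 'uh::polish_space \<Rightarrow> 'xh measure"
    and hh :: "'xh \<Rightarrow> 'y" and xh0 :: 'xh
    and \<epsilon> \<delta> :: real and R :: "('x \<times> 'xh) set"
    and L :: "'y \<Rightarrow> 'ap set"
    and q0 :: "'q::finite" and F :: "'q set" and \<tau> :: "'q \<Rightarrow> 'ap set \<Rightarrow> 'q"
    and V :: "'x \<Rightarrow> 'q \<Rightarrow> real" and Vh :: "'xh \<Rightarrow> 'q \<Rightarrow> real"
  assumes t_kernel: "is_kernel t"
    and th_kernel: "is_kernel th"
    and h_meas: "h \<in> borel_measurable borel"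
    and hh_meas: "hh \<in> borel_measurable borel"
    and L_meas: "L \<in> borel \<rightarrow>\<^sub>M count_space UNIV"
    and sim: "approx_sim t h x0 th hh xh0 \<epsilon> \<delta> R"
    and V_range: "\<And>x q. 0 \<le> V x q \<and> V x q \<le> 1"
    and Vh_range: "\<And>xh q. 0 \<le> Vh xh q \<and> Vh xh q \<le> 1"
    and dom: "\<And>x xh q. (x, xh) \<in> R \<Longrightarrow> Vh xh q \<ge> V x q"
  shows "\<forall>x xh q. (x, xh) \<in> R \<longrightarrow>
           T_opt th hh L \<tau> F \<epsilon> \<delta> Vh xh q \<ge> T_star t h L \<tau> F V x q"
proof (intro allI impI)
  fix x xh q assume xR: "(x, xh) \<in> R"
  from sim obtain Uv W where S: "sim_rel t h x0 th hh xh0 \<epsilon> \<delta> Uv R W"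
    unfolding approx_sim_def by blast
  have Rb: "R \<in> sets borel"
    and Uvm: "(\<lambda>p. Uv (fst p) (fst (snd p)) (snd (snd p))) \<in> borel \<rightarrow>\<^sub>M prob_algebra borel"
    and Wmm: "(\<lambda>p. W (fst p) (fst (snd p)) (snd (snd p))) \<in> borel \<rightarrow>\<^sub>M prob_algebra borel"
    and rel: "\<And>x xh. (x, xh) \<in> R \<Longrightarrow> dist (h x) (hh xh) \<le> \<epsilon> \<and>
        (\<forall>u. distr (W u x xh) borel fst = t x u \<and>
             distr (W u x xh) borel snd = (Uv u x xh \<bind> th xh) \<and>
             measure (W u x xh) R \<ge> 1 - \<delta>)"
    using S unfolding sim_rel_def by blast+
  have tx: "(\<lambda>u. t x u) \<in> borel \<rightarrow>\<^sub>M prob_algebra borel"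
    using measurable_compose[OF pair_const_left_borel t_kernel[unfolded is_kernel_def]] by simp
  have thx: "(\<lambda>v. th xh v) \<in> borel \<rightarrow>\<^sub>M prob_algebra borel"
    using measurable_compose[OF pair_const_left_borel th_kernel[unfolded is_kernel_def]] by simp
  have Uvx: "(\<lambda>u. Uv u x xh) \<in> borel \<rightarrow>\<^sub>M prob_algebra borel"
    using measurable_compose[OF pair_const2_left_borel Uvm] by simp
  have Wx: "(\<lambda>u. W u x xh) \<in> borel \<rightarrow>\<^sub>M prob_algebra borel"
    using measurable_compose[OF pair_const2_left_borel Wmm] by simp
  define f where "f x' = ennreal (max (indicator F (\<tau> q (L (h x')))) (V x' (\<tau> q (L (h x')))))" for x'
  define g where "g xh' = (\<Squnion>q' \<in> tau_bar \<tau> L hh \<epsilon> q xh'. ennreal (max (indicator F q') (Vh xh' q')))" for xh'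
  have f1: "f a \<le> 1" for a
    using V_range[of a "\<tau> q (L (h a))"] by (simp add: f_def indicator_def)
  have fg: "f a \<le> g b" if ab: "(a, b) \<in> R" for a b
  proof -
    let ?q = "\<tau> q (L (h a))"
    have qin: "?q \<in> tau_bar \<tau> L hh \<epsilon> q b"
      using rel[OF ab] unfolding tau_bar_def by blast
    have "f a \<le> ennreal (max (indicator F ?q) (Vh b ?q))"
      unfolding f_def using dom[OF ab, of ?q] by (intro ennreal_leI) simp
    also have "\<dots> \<le> g b" unfolding g_def by (rule SUP_upper[OF qin])
    finally show ?thesis .
  qed
  show "T_opt th hh L \<tau> F \<epsilon> \<delta> Vh xh q \<ge> T_star t h L \<tau> F V x q"
    unfolding T_star_def
  proof (rule SUP_least)
    fix \<nu> :: "'x \<Rightarrow> 'q \<Rightarrow> 'u measure" assume "\<nu> \<in> {\<nu>. \<forall>x q. \<nu> x q \<in> space (prob_algebra borel)}"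
    then have N: "\<nu> x q \<in> space (prob_algebra borel)" by blast
    then have Nps: "prob_space (\<nu> x q)" by (simp add: space_prob_algebra)
    have Nne: "space (\<nu> x q) \<noteq> {}" using prob_space.not_empty[OF Nps] .
    have Nsb: "sets (\<nu> x q) = sets borel" using N by (simp add: space_prob_algebra)
    have WxN: "(\<lambda>u. W u x xh) \<in> \<nu> x q \<rightarrow>\<^sub>M subprob_algebra borel"
      using measurable_prob_algebraD[OF Wx] by (simp add: measurable_cong_sets[OF Nsb refl])
    have UvxN: "(\<lambda>u. Uv u x xh) \<in> \<nu> x q \<rightarrow>\<^sub>M subprob_algebra borel"
      using measurable_prob_algebraD[OF Uvx] by (simp add: measurable_cong_sets[OF Nsb refl])
    define \<mu> where "\<mu> = \<nu> x q \<bind> (\<lambda>u. Uv u x xh)"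
    have \<mu>: "\<mu> \<in> space (prob_algebra borel)" unfolding \<mu>_def by (rule bind_in_prob_algebra[OF N Uvx])
    define Wm where "Wm = \<nu> x q \<bind> (\<lambda>u. W u x xh)"
    have Wsp: "Wm \<in> space (prob_algebra borel)" unfolding Wm_def by (rule bind_in_prob_algebra[OF N Wx])
    then have Wps: "prob_space Wm" and Wsb: "sets Wm = sets borel" by (auto simp: space_prob_algebra)
    have spN: "space (\<nu> x q) = UNIV" using sets_eq_imp_space_eq[OF Nsb] by simp
    have Wu: "W u x xh \<in> space (prob_algebra borel)" for u
      using measurable_space[OF Wx, of u] by simp
    have d1: "distr Wm borel fst = \<nu> x q \<bind> t x"
      unfolding Wm_def
      by (subst distr_bind[OF WxN Nne fst_borel])
         (rule bind_cong, use rel[OF xR] in auto)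
    have d2: "distr Wm borel snd = \<mu> \<bind> th xh"
    proof -
      have "distr Wm borel snd = \<nu> x q \<bind> (\<lambda>u. Uv u x xh \<bind> th xh)"
        unfolding Wm_def
        by (subst distr_bind[OF WxN Nne snd_borel])
           (rule bind_cong, use rel[OF xR] in auto)
      also have "\<dots> = \<mu> \<bind> th xh"
        unfolding \<mu>_def
        using bind_assoc[OF UvxN measurable_prob_algebraD[OF thx]] by simp
      finally show ?thesis .
    qed
    have dR: "emeasure Wm (UNIV - R) \<le> ennreal \<delta>"
    proof -
      have "emeasure Wm (UNIV - R) = (\<integral>\<^sup>+u. emeasure (W u x xh) (UNIV - R) \<partial>\<nu> x q)"
        unfolding Wm_def using Rb by (intro emeasure_bind_prob_algebra[OF N Wx]) auto
      also have "\<dots> \<le> (\<integral>\<^sup>+u. ennreal \<delta> \<partial>\<nu> x q)"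
      proof (rule nn_integral_mono)
        fix u
        interpret Wu: prob_space "W u x xh" using Wu[of u] by (simp add: space_prob_algebra)
        have sWu: "sets (W u x xh) = sets borel" using Wu[of u] by (simp add: space_prob_algebra)
        have spWu: "space (W u x xh) = UNIV" using sets_eq_imp_space_eq[OF sWu] by simp
        have RWu: "R \<in> sets (W u x xh)" using Rb sWu by simp
        have "emeasure (W u x xh) (UNIV - R) = ennreal (1 - measure (W u x xh) R)"
          using Wu.prob_compl[OF RWu] spWu by (simp add: Wu.emeasure_eq_measure)
        also have "\<dots> \<le> ennreal \<delta>" proof (rule ennreal_leI)
          have "measure (W u x xh) R \<ge> 1 - \<delta>" using rel[OF xR] by blast
          then show "1 - measure (W u x xh) R \<le> \<delta>" by linarith
        qed
        finally show "emeasure (W u x xh) (UNIV - R) \<le> ennreal \<delta>" .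
      qed
      also have "\<dots> = ennreal \<delta>"
        using prob_space.emeasure_space_1[OF Nps] by simp
      finally show ?thesis .
    qed
    have P: "prob_space (\<nu> x q \<bind> t x)" by (rule prob_space_bind'[OF N tx])
    have Tp: "T_pol t h L \<tau> F \<nu> V x q = (\<integral>\<^sup>+x'. f x' \<partial>(\<nu> x q \<bind> t x))"
      unfolding T_pol_def f_def ..
    have le1: "T_pol t h L \<tau> F \<nu> V x q \<le> 1"
    proof -
      have "(\<integral>\<^sup>+x'. f x' \<partial>(\<nu> x q \<bind> t x)) \<le> (\<integral>\<^sup>+x'. 1 \<partial>(\<nu> x q \<bind> t x))"
        by (rule nn_integral_mono) (rule f1)
      also have "\<dots> = 1" using prob_space.emeasure_space_1[OF P] by simp
      finally show ?thesis using Tp by simp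
    qed
    have le2: "T_pol t h L \<tau> F \<nu> V x q \<le> (\<integral>\<^sup>+xh'. g xh' \<partial>(\<mu> \<bind> th xh)) + ennreal \<delta>"
      using coupling_ineq[OF Wps Wsb Rb dR f1 fg] unfolding Tp d1 d2 .
    have "T_pol t h L \<tau> F \<nu> V x q \<le> min 1 ((\<integral>\<^sup>+xh'. g xh' \<partial>(\<mu> \<bind> th xh)) + ennreal \<delta>)"
      using le1 le2 by simp
    also have "\<dots> \<le> T_opt th hh L \<tau> F \<epsilon> \<delta> Vh xh q"
      unfolding T_opt_def g_def by (rule SUP_upper[OF \<mu>])
    finally show "T_pol t h L \<tau> F \<nu> V x q \<le> T_opt th hh L \<tau> F \<epsilon> \<delta> Vh xh q" .
  qed
qed

end
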